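(* Let $f:(\mathbb R^2,q)\to(\mathbb R^3,p)$ be a smooth germ with a corank 1 singularity at $q$ whose curvature parabola $\Delta_p$ is a non-degenerate parabola or a half-line, and let $(u,v)$ be a coordinate system with $f_u(q)\neq0$, $f_v(q)=0$, $|f_u(q)|=|f_{vv}(q)|=1$ and $\langle f_u(q),f_{vv}(q)\rangle=0$. Then $$\kappa_a(p)=\big(\langle f_{uu},f_{vv}\rangle-\langle f_{uv},f_{vv}\rangle^2\big)(q).$$
   Context: $T_pM=\operatorname{im}df_q$, $N_pM$ its orthogonal complement with a fixed orientation. First fundamental form $I(X,Y)=\langle df_qX,df_qY\rangle$; second fundamental form $II$: the symmetric bilinear map $T_q\mathbb R^2\times T_q\mathbb R^2\to N_pM$ with $II(\partial_u,\partial_u)=f_{uu}(q)^\perp$, $II(\partial_u,\partial_v)=f_{uv}(q)^\perp$, $II(\partial_v,\partial_v)=f_{vv}(q)^\perp$ ($\perp$ = orthogonal projection to $N_pM$). Curvature parabola $\Delta_p=\{II(X,X): I(X,X)=1\}\subset N_pM$. Axial vector $v_a$: if $\Delta_p$ is a non-degenerate parabola, the unit vector along its axis of symmetry pointing to its interior; if $\Delta_p$ is a half-line, the unit vector in the direction in which the half-line extends. Axial curvature $\kappa_a(p)=\min\{\langle II(X,X),v_a\rangle: I(X,X)=1\}$. *)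

theory Defs
  imports "HOL-Analysis.Analysis"
begin

type_synonym surf = "real \<times> real \<Rightarrow> real^3"

definition pu :: "surf \<Rightarrow> surf" where
  "pu g = (\<lambda>(u,v). vector_derivative (\<lambda>s. g (s,v)) (at u))"

definition pv :: "surf \<Rightarrow> surf" where
  "pv g = (\<lambda>(u,v). vector_derivative (\<lambda>t. g (u,t)) (at v))"

inductive_set partials :: "surf \<Rightarrow> surf set" for f :: surf where
  self: "f \<in> partials f"
| du: "g \<in> partials f \<Longrightarrow> pu g \<in> partials f"
| dv: "g \<in> partials f \<Longrightarrow> pv g \<in> partials f"

definition smooth_on :: "(real \<times> real) set \<Rightarrow> surf \<Rightarrow> bool" where
  "smooth_on U f \<longleftrightarrow> (\<forall>g\<in>partials f. continuous_on U g \<and>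
     (\<forall>u v. (u,v) \<in> U \<longrightarrow> (\<lambda>s. g (s,v)) differentiable (at u) \<and> (\<lambda>t. g (u,t)) differentiable (at v)))"

text \<open>Differential df_q applied to X = (a,b) = a d/du + b d/dv.\<close>
definition dfq :: "surf \<Rightarrow> real \<times> real \<Rightarrow> real \<times> real \<Rightarrow> real^3" where
  "dfq f q X = fst X *\<^sub>R pu f q + snd X *\<^sub>R pv f q"

definition tangent_space :: "surf \<Rightarrow> real \<times> real \<Rightarrow> (real^3) set" where
  "tangent_space f q = range (dfq f q)"

definition normal_space :: "surf \<Rightarrow> real \<times> real \<Rightarrow> (real^3) set" where
  "normal_space f q = {y. \<forall>t\<in>tangent_space f q. y \<bullet> t = 0}"

definition nproj :: "surf \<Rightarrow> real \<times> real \<Rightarrow> real^3 \<Rightarrow> real^3" where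
  "nproj f q x = (THE y. y \<in> normal_space f q \<and> x - y \<in> tangent_space f q)"

definition first_ff :: "surf \<Rightarrow> real \<times> real \<Rightarrow> real \<times> real \<Rightarrow> real \<times> real \<Rightarrow> real" where
  "first_ff f q X Y = dfq f q X \<bullet> dfq f q Y"

definition second_ff :: "surf \<Rightarrow> real \<times> real \<Rightarrow> real \<times> real \<Rightarrow> real \<times> real \<Rightarrow> real^3" where
  "second_ff f q X Y =
     (fst X * fst Y) *\<^sub>R nproj f q (pu (pu f) q)
   + (fst X * snd Y + snd X * fst Y) *\<^sub>R nproj f q (pv (pu f) q)
   + (snd X * snd Y) *\<^sub>R nproj f q (pv (pv f) q)"

definition curvature_parabola :: "surf \<Rightarrow> real \<times> real \<Rightarrow> (real^3) set" where
  "curvature_parabola f q = {second_ff f q X X | X. first_ff f q X X = 1}"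

definition axial_vector :: "(real^3) set \<Rightarrow> real^3 \<Rightarrow> bool" where
  "axial_vector P w \<longleftrightarrow> norm w = 1 \<and>
    ((\<exists>c e1 a. norm e1 = 1 \<and> e1 \<bullet> w = 0 \<and> a > 0 \<and>
        P = {c + t *\<^sub>R e1 + (a * t\<^sup>2) *\<^sub>R w | t. True})
     \<or> (\<exists>c. P = {c + s *\<^sub>R w | s. s \<ge> 0}))"

definition nondeg_parabola_or_halfline :: "(real^3) set \<Rightarrow> bool" where
  "nondeg_parabola_or_halfline P \<longleftrightarrow> (\<exists>w. axial_vector P w)"

definition axial_curvature :: "surf \<Rightarrow> real \<times> real \<Rightarrow> real" where
  "axial_curvature f q =
    (let w = (THE w. axial_vector (curvature_parabola f q) w) in
     Inf {second_ff f q X X \<bullet> w | X. first_ff f q X X = 1})"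

end

theory Submission imports Defs begin

lemma quart_lead:
  fixes a x0 x1 x2 y0 y1 y2 :: real
  assumes h: "\<forall>t. a*(x0+x1*t+x2*t^2)^2 = y0+y1*t+y2*t^2" and a: "a > 0"
  shows "x2 = 0"
proof -
  define F where "F t = a*(x0+x1*t+x2*t^2)^2 - (y0+y1*t+y2*t^2)" for t :: real
  have F0: "F t = 0" for t using h unfolding F_def by simp
  have "24*a*x2^2 = F 2 - 4*F 1 + 6*F 0 - 4*F (-1) + F (-2)"
    unfolding F_def by (simp add: algebra_simps power2_eq_square power4_eq_xxxx)
  then have "a*x2^2 = 0" using F0 by simp
  then show ?thesis using a by simp
qed

lemma quad_vec:
  fixes V0 V1 V2 :: "'a::real_vector"
  assumes h: "\<forall>t::real. V0 + t *\<^sub>R V1 + (t^2) *\<^sub>R V2 = 0"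
  shows "V2 = 0"
proof -
  have a: "V0 = 0" using h[rule_format, of 0] by simp
  have b: "V0 + V1 + V2 = 0" using h[rule_format, of 1] by simp
  have c: "V0 - V1 + V2 = 0" using h[rule_format, of "-1"] by simp
  have "(2::real) *\<^sub>R V2 = (V0 + V1 + V2) + (V0 - V1 + V2) - 2 *\<^sub>R V0"
    by (simp add: algebra_simps scaleR_2)
  then show ?thesis using a b c by simp
qed

lemma para_sub_para:
  fixes c e w d f v :: "'a::real_inner"
  assumes ne: "norm e = 1" and nw: "norm w = 1" and ew: "e \<bullet> w = 0" and a: "a > 0"
    and nf: "norm f = 1" and nv: "norm v = 1" and ev: "f \<bullet> v = 0" and b: "b > 0"
    and sub: "\<forall>t. \<exists>s. c + t *\<^sub>R e + (a*t^2) *\<^sub>R w = d + s *\<^sub>R f + (b* s^2) *\<^sub>R v"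
  shows "w = v"
proof -
  have ef: "f \<bullet> f = 1" using nf by (simp add: dot_square_norm)
  have wv: "v \<bullet> v = 1" using nv by (simp add: dot_square_norm)
  have vf: "v \<bullet> f = 0" using ev by (simp add: inner_commute)
  define x0 where "x0 = (c - d) \<bullet> f"
  define x1 where "x1 = e \<bullet> f"
  define x2 where "x2 = a * (w \<bullet> f)"
  define y0 where "y0 = (c - d) \<bullet> v"
  define y1 where "y1 = e \<bullet> v"
  define y2 where "y2 = a * (w \<bullet> v)"
  have key: "\<exists>s. s = x0 + x1*t + x2*t^2 \<and> b* s^2 = y0 + y1*t + y2*t^2 \<and>
      c + t *\<^sub>R e + (a*t^2) *\<^sub>R w = d + s *\<^sub>R f + (b* s^2) *\<^sub>R v" for t
  proof -
    obtain s where hs: "c + t *\<^sub>R e + (a*t^2) *\<^sub>R w = d + s *\<^sub>R f + (b* s^2) *\<^sub>R v"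
      using sub by blast
    have d: "c - d + t *\<^sub>R e + (a*t^2) *\<^sub>R w = s *\<^sub>R f + (b* s^2) *\<^sub>R v"
      using hs by (simp add: algebra_simps)
    have "(c - d + t *\<^sub>R e + (a*t^2) *\<^sub>R w) \<bullet> f = s"
      unfolding d by (simp add: inner_add_left ef vf)
    then have s1: "s = x0 + x1*t + x2*t^2"
      unfolding x0_def x1_def x2_def by (simp add: inner_add_left inner_diff_left algebra_simps)
    have "(c - d + t *\<^sub>R e + (a*t^2) *\<^sub>R w) \<bullet> v = b* s^2"
      unfolding d by (simp add: inner_add_left wv ev)
    then have s2: "b* s^2 = y0 + y1*t + y2*t^2"
      unfolding y0_def y1_def y2_def by (simp add: inner_add_left inner_diff_left algebra_simps)
    show ?thesis using s1 s2 hs by blast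
  qed
  have "\<forall>t. b*(x0+x1*t+x2*t^2)^2 = y0+y1*t+y2*t^2"
    using key by metis
  then have x20: "x2 = 0" using quart_lead b by blast
  define V0 where "V0 = c - d - x0 *\<^sub>R f - (b*x0^2) *\<^sub>R v"
  define V1 where "V1 = e - x1 *\<^sub>R f - (2*b*x0*x1) *\<^sub>R v"
  define V2 where "V2 = a *\<^sub>R w - (b*x1^2) *\<^sub>R v"
  have "\<forall>t. V0 + t *\<^sub>R V1 + (t^2) *\<^sub>R V2 = 0"
  proof
    fix t
    obtain s where s1: "s = x0 + x1*t" and
      hs: "c + t *\<^sub>R e + (a*t^2) *\<^sub>R w = d + s *\<^sub>R f + (b* s^2) *\<^sub>R v"
      using key[of t] x20 by auto
    have "V0 + t *\<^sub>R V1 + (t^2) *\<^sub>R V2 =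
       (c + t *\<^sub>R e + (a*t^2) *\<^sub>R w) - (d + s *\<^sub>R f + (b* s^2) *\<^sub>R v)"
      unfolding V0_def V1_def V2_def s1
      by (simp add: algebra_simps power2_eq_square)
    then show "V0 + t *\<^sub>R V1 + (t^2) *\<^sub>R V2 = 0" using hs by simp
  qed
  then have "V2 = 0" by (rule quad_vec)
  then have eq: "a *\<^sub>R w = (b*x1^2) *\<^sub>R v" unfolding V2_def by simp
  then have "norm (a *\<^sub>R w) = norm ((b*x1^2) *\<^sub>R v)" by simp
  then have "a = b*x1^2" using a b nw nv by simp
  then show ?thesis using eq a by (metis scaleR_cancel_left less_irrefl)
qed


lemma para_not_line:
  fixes c e w d v :: "'a::real_inner"
  assumes ne: "norm e = 1" and nw: "norm w = 1" and ew: "e \<bullet> w = 0" and a: "a > 0"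
    and sub: "\<forall>t. \<exists>s. c + t *\<^sub>R e + (a * t^2) *\<^sub>R w = d + s *\<^sub>R v"
  shows False
proof -
  have ee: "e \<bullet> e = 1" using ne by (simp add: dot_square_norm)
  have ww: "w \<bullet> w = 1" using nw by (simp add: dot_square_norm)
  have we: "w \<bullet> e = 0" using ew by (simp add: inner_commute)
  obtain s0 where h0: "c = d + s0 *\<^sub>R v" using sub[rule_format, of 0] by auto
  obtain s1 where h1: "c + e + a *\<^sub>R w = d + s1 *\<^sub>R v" using sub[rule_format, of 1] by auto
  obtain s2 where h2: "c - e + a *\<^sub>R w = d + s2 *\<^sub>R v" using sub[rule_format, of "-1"] by auto
  have g1: "e + a *\<^sub>R w = (s1 - s0) *\<^sub>R v" using h0 h1 by (simp add: algebra_simps)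
  have g2: "- e + a *\<^sub>R w = (s2 - s0) *\<^sub>R v" using h0 h2 by (simp add: algebra_simps)
  have k1: "(s1 - s0) * (v \<bullet> e) = 1"
    using arg_cong[OF g1, of "\<lambda>x. x \<bullet> e"] by (simp add: inner_add_left inner_diff_left ee we)
  have m1: "(s1 - s0) * (v \<bullet> w) = a"
    using arg_cong[OF g1, of "\<lambda>x. x \<bullet> w"] by (simp add: inner_add_left inner_diff_left ww ew)
  have k2: "(s2 - s0) * (v \<bullet> e) = -1"
    using arg_cong[OF g2, of "\<lambda>x. x \<bullet> e"] by (simp add: inner_add_left inner_diff_left ee we)
  have m2: "(s2 - s0) * (v \<bullet> w) = a"
    using arg_cong[OF g2, of "\<lambda>x. x \<bullet> w"] by (simp add: inner_add_left inner_diff_left ww ew)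
  have "s2 - s0 = -(s1 - s0)"
  proof -
    have "((s2 - s0) + (s1 - s0)) * (v \<bullet> e) = 0" using k1 k2 by (simp add: algebra_simps)
    moreover have "v \<bullet> e \<noteq> 0" using k1 by auto
    ultimately show ?thesis by simp
  qed
  then have "a = - a" using m1 m2 by (metis minus_mult_left)
  then show False using a by simp
qed

lemma halfline_eq:
  fixes c w d v :: "'a::real_inner"
  assumes nw: "norm w = 1" and nv: "norm v = 1"
    and eq: "{c + s *\<^sub>R w | s. s \<ge> 0} = {d + s *\<^sub>R v | s. s \<ge> 0}"
  shows "w = v"
proof -
  have m1: "c + s *\<^sub>R w \<in> {c + s *\<^sub>R w | s. s \<ge> 0}" if "s \<ge> 0" for s
    using that by blast
  have m2: "d + s *\<^sub>R v \<in> {d + s *\<^sub>R v | s. s \<ge> 0}" if "s \<ge> 0" for s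
    using that by blast
  have "c + 0 *\<^sub>R w \<in> {d + s *\<^sub>R v | s. s \<ge> 0}" using m1[of 0] unfolding eq by simp
  then obtain s0 where s0: "s0 \<ge> 0" "c = d + s0 *\<^sub>R v" by auto
  have "c + 1 *\<^sub>R w \<in> {d + s *\<^sub>R v | s. s \<ge> 0}" using m1[of 1] unfolding eq by simp
  then obtain s1 where s1: "c + w = d + s1 *\<^sub>R v" by auto
  have wv: "w = (s1 - s0) *\<^sub>R v" using s0(2) s1 by (simp add: algebra_simps)
  then have "\<bar>s1 - s0\<bar> = 1" using nw nv by simp
  then consider "s1 - s0 = 1" | "s1 - s0 = -1" by linarith
  then show ?thesis
  proof cases
    case 1 then show ?thesis using wv by simp
  next
    case 2
    have "d + (s0 + 1) *\<^sub>R v \<in> {c + s *\<^sub>R w | s. s \<ge> 0}" using m2[of "s0+1"] s0(1) unfolding eq by simp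
    then obtain r where r: "r \<ge> 0" "d + (s0 + 1) *\<^sub>R v = c + r *\<^sub>R w" by auto
    have wv': "w = - v" using wv 2 by simp
    have "d + (s0 + 1) *\<^sub>R v = d + (s0 - r) *\<^sub>R v" using r(2) s0(2) wv' by (simp add: algebra_simps)
    then have "(1 + r) *\<^sub>R v = 0" by (simp add: algebra_simps)
    then have "v = 0" using r by simp
    then show ?thesis using nv by simp
  qed
qed

lemma dfq_eq: assumes "pv f q = 0" shows "dfq f q X = fst X *\<^sub>R pu f q"
  using assms unfolding dfq_def by simp

lemma nproj_eq:
  assumes pv0: "pv f q = 0" and ne: "norm (pu f q) = 1"
  shows "nproj f q x = x - (x \<bullet> pu f q) *\<^sub>R pu f q"
proof -
  define e where "e = pu f q"
  have ee: "e \<bullet> e = 1" using ne unfolding e_def by (simp add: dot_square_norm)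
  have tan: "y \<in> tangent_space f q \<longleftrightarrow> (\<exists>k. y = k *\<^sub>R e)" for y
  proof
    assume "y \<in> tangent_space f q"
    then obtain X where "y = dfq f q X" unfolding tangent_space_def by blast
    then show "\<exists>k. y = k *\<^sub>R e" using dfq_eq[OF pv0] unfolding e_def by blast
  next
    assume "\<exists>k. y = k *\<^sub>R e"
    then obtain k where k: "y = k *\<^sub>R e" by blast
    have "dfq f q (k, 0) = k *\<^sub>R e" using dfq_eq[OF pv0] unfolding e_def by simp
    then show "y \<in> tangent_space f q" unfolding tangent_space_def k by (metis rangeI)
  qed
  have nor: "y \<in> normal_space f q \<longleftrightarrow> y \<bullet> e = 0" for y
  proof
    assume "y \<in> normal_space f q"
    then have "\<forall>t\<in>tangent_space f q. y \<bullet> t = 0" unfolding normal_space_def by simp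
    moreover have "e \<in> tangent_space f q" using tan[of e] by (metis scaleR_one)
    ultimately show "y \<bullet> e = 0" by blast
  next
    assume "y \<bullet> e = 0"
    then show "y \<in> normal_space f q" unfolding normal_space_def using tan by auto
  qed
  show ?thesis unfolding nproj_def e_def[symmetric]
  proof (rule the_equality)
    show "x - (x \<bullet> e) *\<^sub>R e \<in> normal_space f q \<and> x - (x - (x \<bullet> e) *\<^sub>R e) \<in> tangent_space f q"
      using nor tan ee by (simp add: inner_diff_left)
  next
    fix y assume h: "y \<in> normal_space f q \<and> x - y \<in> tangent_space f q"
    then obtain k where k: "x - y = k *\<^sub>R e" using tan by blast
    have y: "y = x - k *\<^sub>R e" using k by (simp add: algebra_simps)
    have "y \<bullet> e = 0" using h nor by blast
    then have "k = x \<bullet> e" using ee unfolding y by (simp add: inner_diff_left)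
    then show "y = x - (x \<bullet> e) *\<^sub>R e" using y by simp
  qed
qed

theorem mainTheorem3:
  fixes f :: "real \<times> real \<Rightarrow> real^3" and q :: "real \<times> real" and U :: "(real \<times> real) set"
  assumes "open U" and "q \<in> U" and "smooth_on U f"
    and "dim (tangent_space f q) = 1"
    and "nondeg_parabola_or_halfline (curvature_parabola f q)"
    and "pu f q \<noteq> 0" and "pv f q = 0"
    and "norm (pu f q) = 1" and "norm (pv (pv f) q) = 1"
    and "pu f q \<bullet> pv (pv f) q = 0"
  shows "axial_curvature f q =
    pu (pu f) q \<bullet> pv (pv f) q - (pv (pu f) q \<bullet> pv (pv f) q)\<^sup>2"
proof -
  note pv0 = assms(7) and ne = assms(8) and nC = assms(9) and eC = assms(10)
  define e where "e = pu f q"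
  define C where "C = pv (pv f) q"
  define A where "A = nproj f q (pu (pu f) q)"
  define B where "B = nproj f q (pv (pu f) q)"
  have ee: "e \<bullet> e = 1" using ne unfolding e_def by (simp add: dot_square_norm)
  have CC: "C \<bullet> C = 1" using nC unfolding C_def by (simp add: dot_square_norm)
  have eC': "e \<bullet> C = 0" using eC unfolding e_def C_def .
  have np: "nproj f q x = x - (x \<bullet> e) *\<^sub>R e" for x
    using nproj_eq[OF pv0 ne] unfolding e_def .
  have nC': "nproj f q C = C" using np eC' by (simp add: inner_commute)
  have AC: "A \<bullet> C = pu (pu f) q \<bullet> C" unfolding A_def np using eC' by (simp add: inner_diff_left)
  have BC: "B \<bullet> C = pv (pu f) q \<bullet> C" unfolding B_def np using eC' by (simp add: inner_diff_left)
  have ff: "first_ff f q X X = (fst X)^2" for X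
    unfolding first_ff_def dfq_eq[OF pv0] e_def[symmetric] using ee
    by (simp add: power2_eq_square)
  have sf: "second_ff f q X X = ((fst X)^2) *\<^sub>R A + (2 * fst X * snd X) *\<^sub>R B + ((snd X)^2) *\<^sub>R C" for X
    unfolding second_ff_def A_def[symmetric] B_def[symmetric] C_def[symmetric] nC'
    by (simp add: power2_eq_square algebra_simps)
  define P where "P = curvature_parabola f q"
  have P: "P = {A + (2*t) *\<^sub>R B + (t^2) *\<^sub>R C | t. True}"
  proof (rule set_eqI, rule iffI)
    fix x assume "x \<in> P"
    then obtain X where X: "x = second_ff f q X X" "(fst X)^2 = 1"
      unfolding P_def curvature_parabola_def ff by auto
    have "x = A + (2 * (fst X * snd X)) *\<^sub>R B + ((fst X * snd X)^2) *\<^sub>R C"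
      using X by (simp add: sf power_mult_distrib mult.assoc)
    then show "x \<in> {A + (2*t) *\<^sub>R B + (t^2) *\<^sub>R C | t. True}" by blast
  next
    fix x assume "x \<in> {A + (2*t) *\<^sub>R B + (t^2) *\<^sub>R C | t. True}"
    then obtain t where t: "x = A + (2*t) *\<^sub>R B + (t^2) *\<^sub>R C" by blast
    have "x = second_ff f q (1,t) (1,t)" "first_ff f q (1,t) (1,t) = 1"
      using t by (simp_all add: sf ff)
    then show "x \<in> P" unfolding P_def curvature_parabola_def by blast
  qed
  define \<beta> where "\<beta> = B \<bullet> C"
  define B' where "B' = B - \<beta> *\<^sub>R C"
  define L where "L = norm B'"
  have B'C: "B' \<bullet> C = 0" unfolding B'_def \<beta>_def using CC by (simp add: inner_diff_left)
  have BB': "B = B' + \<beta> *\<^sub>R C" unfolding B'_def by simp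
  define c0 where "c0 = A - (\<beta>^2) *\<^sub>R C - (2*\<beta>) *\<^sub>R B'"
  have shift: "A + (2*t) *\<^sub>R B + (t^2) *\<^sub>R C = c0 + (2*(t+\<beta>)) *\<^sub>R B' + ((t+\<beta>)^2) *\<^sub>R C" for t
    unfolding c0_def BB' by (simp add: algebra_simps power2_eq_square)
  have P2: "P = {c0 + (2 * s) *\<^sub>R B' + (s^2) *\<^sub>R C | s. True}"
    unfolding P shift
  proof (rule set_eqI, rule iffI)
    fix x assume "x \<in> {c0 + (2 * s) *\<^sub>R B' + (s^2) *\<^sub>R C | s. True}"
    then obtain s where "x = c0 + (2 * s) *\<^sub>R B' + (s^2) *\<^sub>R C" by blast
    then have "x = c0 + (2 * ((s - \<beta>) + \<beta>)) *\<^sub>R B' + (((s - \<beta>) + \<beta>)^2) *\<^sub>R C" by simp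
    then show "x \<in> {c0 + (2 * (t + \<beta>)) *\<^sub>R B' + ((t + \<beta>)^2) *\<^sub>R C | t. True}" by blast
  next
    fix x assume "x \<in> {c0 + (2 * (t + \<beta>)) *\<^sub>R B' + ((t + \<beta>)^2) *\<^sub>R C | t. True}"
    then obtain t where "x = c0 + (2 * (t + \<beta>)) *\<^sub>R B' + ((t + \<beta>)^2) *\<^sub>R C" by blast
    then show "x \<in> {c0 + (2 * s) *\<^sub>R B' + (s^2) *\<^sub>R C | s. True}" by blast
  qed
  have uC: "norm C = 1" using nC unfolding C_def .

  have axC: "axial_vector P C" and uniq: "\<And>w. axial_vector P w \<Longrightarrow> w = C"
  proof -
    have "axial_vector P C \<and> (\<forall>w. axial_vector P w \<longrightarrow> w = C)"
    proof (cases "L = 0")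
      case False
      then have Lpos: "L > 0" unfolding L_def by simp
      define e1 where "e1 = (1/L) *\<^sub>R B'"
      define a0 where "a0 = 1/(4*L^2)"
      have ne1: "norm e1 = 1" unfolding e1_def L_def using Lpos L_def by simp
      have e1C: "e1 \<bullet> C = 0" unfolding e1_def using B'C by simp
      have a0: "a0 > 0" unfolding a0_def using Lpos by simp
      have rep: "c0 + \<tau> *\<^sub>R e1 + (a0*\<tau>^2) *\<^sub>R C = c0 + (2 * (\<tau>/(2*L))) *\<^sub>R B' + ((\<tau>/(2*L))^2) *\<^sub>R C" for \<tau>
      proof -
        have "\<tau> *\<^sub>R e1 = (2 * (\<tau>/(2*L))) *\<^sub>R B'" unfolding e1_def using Lpos by simp
        moreover have "a0*\<tau>^2 = (\<tau>/(2*L))^2" unfolding a0_def using Lpos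
          by (simp add: power_divide power_mult_distrib)
        ultimately show ?thesis by simp
      qed
      have P3: "P = {c0 + \<tau> *\<^sub>R e1 + (a0*\<tau>^2) *\<^sub>R C | \<tau>. True}"
        unfolding P2 rep
      proof (rule set_eqI, rule iffI)
        fix x assume "x \<in> {c0 + (2 * s) *\<^sub>R B' + (s^2) *\<^sub>R C | s. True}"
        then obtain s where "x = c0 + (2 * s) *\<^sub>R B' + (s^2) *\<^sub>R C" by blast
        moreover have "(2*L * s)/(2*L) = s" using Lpos by simp
        ultimately show "x \<in> {c0 + (2 * (\<tau>/(2*L))) *\<^sub>R B' + ((\<tau>/(2*L))^2) *\<^sub>R C | \<tau>. True}"
          by (metis (mono_tags, lifting) mem_Collect_eq)
      next
        fix x assume "x \<in> {c0 + (2 * (\<tau>/(2*L))) *\<^sub>R B' + ((\<tau>/(2*L))^2) *\<^sub>R C | \<tau>. True}"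
        then obtain \<tau> where "x = c0 + (2 * (\<tau>/(2*L))) *\<^sub>R B' + ((\<tau>/(2*L))^2) *\<^sub>R C" by blast
        then show "x \<in> {c0 + (2 * s) *\<^sub>R B' + (s^2) *\<^sub>R C | s. True}" by blast
      qed
      have ax: "axial_vector P C" unfolding axial_vector_def using uC ne1 e1C a0 P3 by blast
      moreover have "w = C" if w: "axial_vector P w" for w
      proof -
        have nw: "norm w = 1" using w unfolding axial_vector_def by blast
        have inP: "\<forall>\<tau>. c0 + \<tau> *\<^sub>R e1 + (a0*\<tau>^2) *\<^sub>R C \<in> P" unfolding P3 by blast
        from w consider
          (para) c e a where "norm e = 1" "e \<bullet> w = 0" "a > 0" "P = {c + t *\<^sub>R e + (a * t^2) *\<^sub>R w | t. True}"
          | (line) c where "P = {c + s *\<^sub>R w | s. s \<ge> 0}"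
          unfolding axial_vector_def by blast
        then show ?thesis
        proof cases
          case para
          have "\<forall>\<tau>. \<exists>t. c0 + \<tau> *\<^sub>R e1 + (a0 * \<tau>^2) *\<^sub>R C = c + t *\<^sub>R e + (a * t^2) *\<^sub>R w"
            using inP para(4) by blast
          then have "C = w" using para_sub_para[OF ne1 uC e1C a0 para(1) nw para(2) para(3)] by blast
          then show ?thesis by simp
        next
          case line
          have "\<forall>\<tau>. \<exists>s. c0 + \<tau> *\<^sub>R e1 + (a0 * \<tau>^2) *\<^sub>R C = c + s *\<^sub>R w"
            using inP line by blast
          then show ?thesis using para_not_line[OF ne1 uC e1C a0] by blast
        qed
      qed
      ultimately show ?thesis by blast
    next
      case True
      then have B'0: "B' = 0" unfolding L_def by simp
      have P3: "P = {c0 + s *\<^sub>R C | s. s \<ge> 0}"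
        unfolding P2 B'0
      proof (rule set_eqI, rule iffI)
        fix x assume "x \<in> {c0 + (2 * s) *\<^sub>R (0::real^3) + (s^2) *\<^sub>R C | s. True}"
        then show "x \<in> {c0 + s *\<^sub>R C | s. s \<ge> 0}" by auto
      next
        fix x assume "x \<in> {c0 + s *\<^sub>R C | s. s \<ge> 0}"
        then obtain s where s: "s \<ge> 0" "x = c0 + s *\<^sub>R C" by blast
        then have "x = c0 + (2 * sqrt s) *\<^sub>R (0::real^3) + ((sqrt s)^2) *\<^sub>R C" by simp
        then show "x \<in> {c0 + (2 * s) *\<^sub>R (0::real^3) + (s^2) *\<^sub>R C | s. True}" by blast
      qed
      have ax: "axial_vector P C" unfolding axial_vector_def using uC P3 by blast
      moreover have "w = C" if w: "axial_vector P w" for w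
      proof -
        have nw: "norm w = 1" using w unfolding axial_vector_def by blast
        from w consider
          (para) c e a where "norm e = 1" "e \<bullet> w = 0" "a > 0" "P = {c + t *\<^sub>R e + (a * t^2) *\<^sub>R w | t. True}"
          | (line) c where "P = {c + s *\<^sub>R w | s. s \<ge> 0}"
          unfolding axial_vector_def by blast
        then show ?thesis
        proof cases
          case para
          have "\<forall>t. \<exists>s. c + t *\<^sub>R e + (a * t^2) *\<^sub>R w = c0 + s *\<^sub>R C"
          proof
            fix t
            have "c + t *\<^sub>R e + (a * t^2) *\<^sub>R w \<in> P" using para(4) by blast
            then show "\<exists>s. c + t *\<^sub>R e + (a * t^2) *\<^sub>R w = c0 + s *\<^sub>R C" unfolding P3 by blast
          qed
          then show ?thesis using para_not_line[OF para(1) nw para(2) para(3)] by blast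
        next
          case line
          show ?thesis using halfline_eq[OF nw uC, of c c0] line P3 by simp
        qed
      qed
      ultimately show ?thesis by blast
    qed
    then show "axial_vector P C" "\<And>w. axial_vector P w \<Longrightarrow> w = C" by blast+
  qed
  have THE: "(THE w. axial_vector (curvature_parabola f q) w) = C"
    unfolding P_def[symmetric] using axC uniq by (rule the_equality)
  have val: "second_ff f q X X \<bullet> C = (fst X)^2 * (A \<bullet> C) + 2 * fst X * snd X * \<beta> + (snd X)^2" for X
    unfolding sf \<beta>_def using CC by (simp add: inner_add_left)
  have "Inf {second_ff f q X X \<bullet> C | X. first_ff f q X X = 1} = A \<bullet> C - \<beta>^2"
  proof (rule cInf_eq_minimum)
    have "second_ff f q (1, -\<beta>) (1, -\<beta>) \<bullet> C = A \<bullet> C - \<beta>^2"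
      unfolding val by (simp add: power2_eq_square)
    moreover have "first_ff f q (1, -\<beta>) (1, -\<beta>) = 1" unfolding ff by simp
    ultimately show "A \<bullet> C - \<beta>^2 \<in> {second_ff f q X X \<bullet> C | X. first_ff f q X X = 1}"
      by (metis (mono_tags, lifting) mem_Collect_eq)
  next
    fix x assume "x \<in> {second_ff f q X X \<bullet> C | X. first_ff f q X X = 1}"
    then obtain X where X: "x = second_ff f q X X \<bullet> C" "(fst X)^2 = 1" unfolding ff by auto
    have "0 \<le> (fst X * snd X + \<beta>)^2" by simp
    also have "\<dots> = (fst X)^2 * (snd X)^2 + 2 * fst X * snd X * \<beta> + \<beta>^2"
      by (simp add: power2_eq_square algebra_simps)
    finally show "A \<bullet> C - \<beta>^2 \<le> x" unfolding X(1) val using X(2) by simp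
  qed
  then show ?thesis
    unfolding axial_curvature_def Let_def THE AC \<beta>_def BC
    unfolding C_def by simp
qed

end
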